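(* For every infinite binary sequence $\rho=\rho_0\rho_1\rho_2\cdots\in\mathcal{L}$, regarding $\rho$ as the real number in $[0,1]$ whose binary expansion is $0.\rho_0\rho_1\rho_2\ldots$ (the blocks concatenated), the sequence $(\{2^n\rho\})_{n\ge 1}$ of fractional parts does not have Poissonian pair correlations.
   Context: Work over the field $\mathbb{F}_2$; binary words are identified with vectors over $\mathbb{F}_2$, with coordinates indexed $1,\dots,e$. Define matrices $M_0=(1)$ and $M_{d+1}=\begin{pmatrix} M_d & M_d\\ 0 & M_d\end{pmatrix}$, so $M_d\in\mathbb{F}_2^{e\times e}$ with $e=2^d$. Let $w_0,\dots,w_{2^e-1}$ be all vectors of $\mathbb{F}_2^e$ in increasing lexicographic order ($w_n$ is the $e$-bit binary representation of $n$, most significant bit first). Let $\sigma$ be the rotation $\sigma(a_1\cdots a_n)=a_na_1\cdots a_{n-1}$. A tuple $\nu=(n_1,\dots,n_e)$ of non-negative integers is suitable if $n_e=0$ and $n_{i+1}\le n_i\le n_{i+1}+1$ for $1\le i\le e-1$. If $C_1,\dots,C_e$ are the columns of $M_d$, set $M_d^\nu=(\sigma^{n_1}(C_1),\dots,\sigma^{n_e}(C_e))$. A word is an $e$-affine necklace if it equals the concatenation $(Mw_0')(Mw_1')\cdots(Mw_{2^e-1}')$ for some $z\in\mathbb{F}_2^e$ and some suitable tuple $\nu$, where $M=M_d^\nu$ and $w_i'=w_i+z$. $\mathcal{L}$ is the set of infinite binary words $\rho_0\rho_1\rho_2\cdots$ where each $\rho_d$ is a $2^d$-affine necklace. For real $x$,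 $\{x\}=x-\lfloor x\rfloor$ and $\Vert x\Vert$ is the distance from $x$ to the nearest integer. A sequence $(x_n)_{n\ge1}$ in $[0,1)$ has Poissonian pair correlations if for every real $s\ge 0$, $\lim_{N\to\infty}F_N(s)=2s$, where $F_N(s)=\frac1N\#\{(i,j):1\le i\ne j\le N,\ \Vert x_i-x_j\Vert<s/N\}$. *)

theory Defs
  imports Complex_Main
begin

text \<open>All indices are 0-based: a coordinate i in 1..e of the paper is i+1 here.
  Elements of F_2 are booleans (True = 1), addition is exclusive or.\<close>

fun Mmat :: "nat \<Rightarrow> nat \<Rightarrow> nat \<Rightarrow> bool" where
  "Mmat 0 i j = True"
| "Mmat (Suc d) i j =
     (if i < 2^d then (if j < 2^d then Mmat d i j else Mmat d i (j - 2^d))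
      else (if j < 2^d then False else Mmat d (i - 2^d) (j - 2^d)))"

definition suitable :: "nat \<Rightarrow> (nat \<Rightarrow> nat) \<Rightarrow> bool" where
  "suitable e nu \<longleftrightarrow> nu (e - 1) = 0 \<and>
     (\<forall>i. i + 1 < e \<longrightarrow> nu (i + 1) \<le> nu i \<and> nu i \<le> nu (i + 1) + 1)"

text \<open>Rotation sigma(a_1...a_n) = a_n a_1 ... a_{n-1}; entry i of sigma^k(C) is
  entry (i - k) mod e of C.\<close>
definition rot_col :: "nat \<Rightarrow> nat \<Rightarrow> (nat \<Rightarrow> bool) \<Rightarrow> nat \<Rightarrow> bool" where
  "rot_col e k C i = C ((i + e - k mod e) mod e)"

definition Mnu :: "nat \<Rightarrow> (nat \<Rightarrow> nat) \<Rightarrow> nat \<Rightarrow> nat \<Rightarrow> bool" where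
  "Mnu d nu i j = rot_col (2^d) (nu j) (\<lambda>r. Mmat d r j) i"

definition matvec :: "nat \<Rightarrow> (nat \<Rightarrow> nat \<Rightarrow> bool) \<Rightarrow> (nat \<Rightarrow> bool) \<Rightarrow> nat \<Rightarrow> bool" where
  "matvec e M v i = odd (card {j. j < e \<and> M i j \<and> v j})"

definition wvec :: "nat \<Rightarrow> nat \<Rightarrow> nat \<Rightarrow> bool" where
  "wvec e n i = odd (n div 2 ^ (e - 1 - i))"

definition necklace_word :: "nat \<Rightarrow> (nat \<Rightarrow> nat) \<Rightarrow> (nat \<Rightarrow> bool) \<Rightarrow> bool list" where
  "necklace_word d nu z =
     concat (map (\<lambda>n. map (\<lambda>i. matvec (2^d) (Mnu d nu) (\<lambda>k. wvec (2^d) n k \<noteq> z k) i)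
                            [0..<2^d])
                 [0..<2^(2^d)])"

definition affine_necklace :: "nat \<Rightarrow> bool list \<Rightarrow> bool" where
  "affine_necklace d w \<longleftrightarrow>
     (\<exists>nu z. suitable (2^d) nu \<and> w = necklace_word d nu z)"

definition in_L :: "(nat \<Rightarrow> bool) \<Rightarrow> bool" where
  "in_L \<rho> \<longleftrightarrow> (\<exists>\<rho>s :: nat \<Rightarrow> bool list.
      (\<forall>d. affine_necklace d (\<rho>s d)) \<and>
      (\<forall>d i. i < length (\<rho>s d) \<longrightarrow> \<rho> ((\<Sum>j<d. length (\<rho>s j)) + i) = \<rho>s d ! i))"

definition word_real :: "(nat \<Rightarrow> bool) \<Rightarrow> real" where
  "word_real \<rho> = (\<Sum>k. (if \<rho> k then 1 else 0) / 2 ^ (k + 1))"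

definition dist_int :: "real \<Rightarrow> real" where
  "dist_int x = min (frac x) (1 - frac x)"

definition FN :: "(nat \<Rightarrow> real) \<Rightarrow> nat \<Rightarrow> real \<Rightarrow> real" where
  "FN x N s = card {(i, j). i \<in> {1..N} \<and> j \<in> {1..N} \<and> i \<noteq> j \<and>
                            dist_int (x i - x j) < s / N} / N"

definition poissonian_pc :: "(nat \<Rightarrow> real) \<Rightarrow> bool" where
  "poissonian_pc x \<longleftrightarrow> (\<forall>s::real. s \<ge> 0 \<longrightarrow> (\<lambda>N. FN x N s) \<longlonglongrightarrow> 2 * s)"

end

theory Submission
  imports Defs
begin



definition par :: "nat \<Rightarrow> (nat \<Rightarrow> bool) \<Rightarrow> bool" where
  "par n P = odd (card {j. j < n \<and> P j})"

lemma par_0[simp]: "par 0 P = False" by (simp add: par_def)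

lemma par_Suc: "par (Suc n) P = (par n P \<noteq> P n)"
proof -
  have "{j. j < Suc n \<and> P j} = (if P n then insert n {j. j < n \<and> P j} else {j. j < n \<and> P j})"
    by (auto simp: less_Suc_eq)
  then show ?thesis by (auto simp: par_def)
qed

lemma par_add: "par (a + b) P = (par a P \<noteq> par b (\<lambda>j. P (j + a)))"
  by (induction b) (auto simp: par_Suc add.commute)

lemma par_xor: "par n (\<lambda>j. P j \<noteq> Q j) = (par n P \<noteq> par n Q)"
  by (induction n) (auto simp: par_Suc)

lemma par_cong: "(\<And>j. j < n \<Longrightarrow> P j = Q j) \<Longrightarrow> par n P = par n Q"
  unfolding par_def by (rule arg_cong[where f="\<lambda>S. odd (card S)"]) auto

lemma par_false[simp]: "par n (\<lambda>_. False) = False"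
  by (induction n) (auto simp: par_Suc)

lemma par_const: "par n (\<lambda>_. c) = (odd n \<and> c)"
  by (induction n) (auto simp: par_Suc)

lemma par_single: "k < n \<Longrightarrow> par n (\<lambda>j. j = k \<and> P j) = P k"
proof -
  assume "k < n"
  then have "{j. j < n \<and> (j = k \<and> P j)} = (if P k then {k} else {})" by auto
  then show ?thesis by (simp add: par_def)
qed




lemma modid:
  fixes e q a :: nat assumes "0 < e"
  shows "((q + 2*e - a mod (2*e)) mod (2*e)) mod e = (q + e - a mod e) mod e"
proof -
  have m2: "a mod (2*e) < 2*e" using assms by simp
  have m1: "a mod e < e" using assms by simp
  have s1: "((q + 2*e - a mod (2*e)) mod (2*e)) mod e = (q + 2*e - a mod (2*e)) mod e"
    by (simp add: mod_mod_cancel)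
  define x where "x = q + 2*e - a mod (2*e)"
  define y where "y = q + e - a mod e"
  have ix: "int x = int q + 2*int e - int (a mod (2*e))" unfolding x_def using m2 by simp
  have iy: "int y = int q + int e - int (a mod e)" unfolding y_def using m1 by simp
  have d2: "int (a mod (2*e)) = int a - 2 * int e * int (a div (2*e))"
  proof -
    have "int (a div (2*e)) * int (2*e) + int (a mod (2*e)) = int a"
      by (metis div_mult_mod_eq of_nat_add of_nat_mult)
    then show ?thesis by (simp add: algebra_simps)
  qed
  have d1: "int (a mod e) = int a - int e * int (a div e)"
  proof -
    have "int (a div e) * int e + int (a mod e) = int a"
      by (metis div_mult_mod_eq of_nat_add of_nat_mult)
    then show ?thesis by (simp add: algebra_simps)
  qed
  have "int x - int y = int e * (1 + 2 * int (a div (2*e)) - int (a div e))"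
    unfolding ix iy d1 d2 by (simp add: algebra_simps)
  then have "int e dvd int x - int y" by simp
  then have "int x mod int e = int y mod int e" by (simp add: mod_eq_dvd_iff)
  then have "x mod e = y mod e" by (metis of_nat_eq_iff zmod_int)
  then show ?thesis using s1 unfolding x_def y_def by simp
qed

lemma modshift:
  fixes e q a :: nat assumes "0 < e"
  shows "(q + e + 2*e - a mod (2*e)) mod (2*e) = ((q + 2*e - a mod (2*e)) mod (2*e) + e) mod (2*e)"
proof -
  have m2: "a mod (2*e) < 2*e" using assms by simp
  then have "q + e + 2*e - a mod (2*e) = (q + 2*e - a mod (2*e)) + e" by simp
  then show ?thesis by (simp add: mod_add_left_eq)
qed

lemma Mmat_last: "Mmat d r (2^d - 1)"
proof (induction d arbitrary: r)
  case 0 then show ?case by simp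
next
  case (Suc d)
  have "2^Suc d - 1 - 2^d = (2::nat)^d - 1" by simp
  moreover have "\<not> 2^Suc d - 1 < (2::nat)^d" by simp
  ultimately show ?case using Suc by (simp del: power_Suc)
qed

lemma mod_hi: "(e::nat) \<le> r \<Longrightarrow> r < 2*e \<Longrightarrow> r mod e = r - e"
  by (simp add: le_mod_geq)

lemma Mmat_hi:
  assumes "j < 2^d" "r < 2*2^d"
  shows "Mmat (Suc d) r (j + 2^d) = Mmat d (r mod 2^d) j"
proof (cases "r < 2^d")
  case True then show ?thesis by simp
next
  case False
  then have "r mod 2^d = r - 2^d" using assms(2) mod_hi by simp
  with False show ?thesis by simp
qed

lemma Mmat_lo:
  assumes "j < 2^d"
  shows "Mmat (Suc d) r j = (r < 2^d \<and> Mmat d r j)"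
  using assms by simp

lemma fold_lemma:
  fixes d q j a :: nat
  defines "e \<equiv> (2::nat)^d"
  assumes "j < e" "q < e"
  shows "(Mmat (Suc d) ((q + 2*e - a mod (2*e)) mod (2*e)) j \<noteq>
          Mmat (Suc d) ((q + e + 2*e - a mod (2*e)) mod (2*e)) j) = Mmat d ((q + e - a mod e) mod e) j"
proof -
  have e0: "0 < e" unfolding e_def by simp
  define r1 where "r1 = (q + 2*e - a mod (2*e)) mod (2*e)"
  define rho where "rho = (q + e - a mod e) mod e"
  have r1m: "r1 mod e = rho" unfolding r1_def rho_def using modid[OF e0] by simp
  have r2: "(q + e + 2*e - a mod (2*e)) mod (2*e) = (r1 + e) mod (2*e)"
    unfolding r1_def using modshift[OF e0] by simp
  have r1l: "r1 < 2*e" unfolding r1_def using e0 by simp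
  have rhol: "rho < e" unfolding rho_def using e0 by simp
  have jl: "j < 2^d" using assms e_def by simp
  show ?thesis
  proof (cases "r1 < e")
    case True
    then have "r1 = rho" using r1m by simp
    moreover have "(r1 + e) mod (2*e) = r1 + e" using True by simp
    ultimately show ?thesis using True jl unfolding r2 r1_def[symmetric] rho_def[symmetric]
      by (simp add: e_def)
  next
    case False
    then have "r1 mod e = r1 - e" using r1l mod_hi by simp
    then have r1e: "r1 = rho + e" using r1m False by simp
    have "r1 + e = rho + 2*e" using r1e by simp
    then have "(r1 + e) mod (2*e) = (rho + 2*e) mod (2*e)" by (simp only:)
    also have "\<dots> = rho" using rhol by simp
    finally have "(r1 + e) mod (2*e) = rho" .
    then show ?thesis using False rhol jl unfolding r2 r1_def[symmetric] rho_def[symmetric]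
      by (simp add: e_def)
  qed
qed

declare Mmat.simps(2)[simp del]




lemma suit_mono: assumes s: "suitable E \<nu>" and jk: "j \<le> k" and kE: "k < E" shows "\<nu> k \<le> \<nu> j"
  using jk kE
proof (induction k rule: dec_induct)
  case base then show ?case by simp
next
  case (step k)
  then have "\<nu> (k+1) \<le> \<nu> k" using s unfolding suitable_def by auto
  with step show ?case by simp
qed

lemma suit_hi: assumes s: "suitable (2*e) \<nu>" and e0: "0 < e" shows "suitable e (\<lambda>j. \<nu> (j + e))"
  unfolding suitable_def
proof (intro conjI allI impI)
  have "e - 1 + e = 2 * e - 1" using e0 by simp
  then show "\<nu> (e - 1 + e) = 0" using s unfolding suitable_def by simp
  fix i assume "i + 1 < e"
  then have l: "(i + e) + 1 < 2*e" by simp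
  have eq: "i + 1 + e = (i + e) + 1" by simp
  have "\<nu> ((i+e)+1) \<le> \<nu> (i+e) \<and> \<nu> (i+e) \<le> \<nu> ((i+e)+1) + 1"
    using s l unfolding suitable_def by blast
  then show "\<nu> (i + 1 + e) \<le> \<nu> (i + e)" "\<nu> (i + e) \<le> \<nu> (i + 1 + e) + 1"
    unfolding eq by simp_all
qed

lemma suit_lo: assumes "suitable (2*e) \<nu>" "0 < e" shows "suitable e (\<lambda>j. \<nu> j - \<nu> (e - 1))"
  unfolding suitable_def
proof (intro conjI allI impI)
  show "\<nu> (e - 1) - \<nu> (e - 1) = 0" by simp
  fix i assume i: "i + 1 < e"
  have m1: "\<nu> (e-1) \<le> \<nu> (i+1)" using suit_mono[OF assms(1), of "i+1" "e-1"] i by simp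
  have st: "\<nu> (i + 1) \<le> \<nu> i \<and> \<nu> i \<le> \<nu> (i + 1) + 1" using assms(1) i unfolding suitable_def by auto
  then show "\<nu> (i + 1) - \<nu> (e - 1) \<le> \<nu> i - \<nu> (e - 1)" "\<nu> i - \<nu> (e - 1) \<le> \<nu> (i + 1) - \<nu> (e - 1) + 1"
    using m1 by linarith+
qed

lemma inj_core:
  assumes "suitable (2^d) \<nu>"
    "\<forall>q<2^d. \<not> par (2^d) (\<lambda>j. v j \<and> Mmat d ((q + 2^d - (\<nu> j + c) mod 2^d) mod 2^d) j)"
    "j < 2^d"
  shows "\<not> v j"
  using assms
proof (induction d arbitrary: \<nu> c v j)
  case 0
  then have "\<not> par 1 (\<lambda>j. v j \<and> Mmat 0 0 j)" by simp
  then show ?case using 0 by (simp add: par_Suc)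
next
  case (Suc d)
  define e where "e = (2::nat)^d"
  have e0: "0 < e" unfolding e_def by simp
  have E: "(2::nat)^Suc d = 2*e" unfolding e_def by simp
  define rr where "rr q j = (q + 2*e - (\<nu> j + c) mod (2*e)) mod (2*e)" for q j :: nat
  have suit: "suitable (2*e) \<nu>" using Suc.prems(1) E by simp
  have H: "\<not> par (2*e) (\<lambda>j. v j \<and> Mmat (Suc d) (rr q j) j)" if "q < 2*e" for q :: nat
    using Suc.prems(2) that unfolding E rr_def by simp
  have rrl: "rr q j < 2*e" for q j :: nat unfolding rr_def using e0 by simp
  have hi: "Mmat (Suc d) (rr q (j + e)) (j + e) = Mmat d ((q + e - (\<nu> (j+e) + c) mod e) mod e) j"
    if "j < e" for q j :: nat
  proof -
    have "Mmat (Suc d) (rr q (j + e)) (j + e) = Mmat d (rr q (j+e) mod e) j"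
      using Mmat_hi[of j d "rr q (j+e)"] that rrl unfolding e_def by simp
    also have "rr q (j+e) mod e = (q + e - (\<nu> (j+e) + c) mod e) mod e"
      unfolding rr_def using modid[OF e0] by simp
    finally show ?thesis .
  qed
  define c' where "c' = \<nu> (e - 1) + c"
  define \<mu> where "\<mu> j = \<nu> j - \<nu> (e - 1)" for j
  have smu: "suitable (2^d) \<mu>" using suit_lo[OF suit e0] unfolding \<mu>_def e_def by simp
  have lowfalse: "\<forall>j<e. \<not> v j"
  proof (intro allI impI)
    fix j assume j: "j < e"
    show "\<not> v j"
    proof (rule Suc.IH[OF smu, of v c'])
      show "j < 2^d" using j e_def by simp
      show "\<forall>q<2 ^ d. \<not> par (2 ^ d) (\<lambda>j. v j \<and> Mmat d ((q + 2 ^ d - (\<mu> j + c') mod 2 ^ d) mod 2 ^ d) j)"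
      proof (intro allI impI)
        fix q :: nat assume q: "q < 2^d"
        then have qe: "q < e" "q + e < 2*e" using e_def by auto
        have x: "\<not> par (2*e) (\<lambda>j. (v j \<and> Mmat (Suc d) (rr q j) j) \<noteq> (v j \<and> Mmat (Suc d) (rr (q+e) j) j))"
        proof -
          have h1: "\<not> par (2*e) (\<lambda>j. v j \<and> Mmat (Suc d) (rr q j) j)" using H qe by simp
          have h2: "\<not> par (2*e) (\<lambda>j. v j \<and> Mmat (Suc d) (rr (q+e) j) j)" using H qe by simp
          show ?thesis unfolding par_xor using h1 h2 by simp
        qed
        have sec: "par e (\<lambda>j. (v (j+e) \<and> Mmat (Suc d) (rr q (j+e)) (j+e)) \<noteq> (v (j+e) \<and> Mmat (Suc d) (rr (q+e) (j+e)) (j+e))) = False"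
        proof -
          have "par e (\<lambda>j. (v (j+e) \<and> Mmat (Suc d) (rr q (j+e)) (j+e)) \<noteq> (v (j+e) \<and> Mmat (Suc d) (rr (q+e) (j+e)) (j+e))) = par e (\<lambda>_. False)"
          proof (rule par_cong)
            fix j assume j: "j < e"
            have "(q + e + e - (\<nu> (j+e) + c) mod e) mod e = (q + e - (\<nu> (j+e) + c) mod e) mod e"
            proof -
              have "(\<nu> (j+e) + c) mod e < e" using e0 by simp
              then have "q + e + e - (\<nu> (j+e) + c) mod e = (q + e - (\<nu> (j+e) + c) mod e) + e" by simp
              then show ?thesis by simp
            qed
            then show "((v (j+e) \<and> Mmat (Suc d) (rr q (j+e)) (j+e)) \<noteq> (v (j+e) \<and> Mmat (Suc d) (rr (q+e) (j+e)) (j+e))) = False"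
              using hi[OF j, of q] hi[OF j, of "q+e"] by simp
          qed
          then show ?thesis by simp
        qed
        have "par (e + e) (\<lambda>j. (v j \<and> Mmat (Suc d) (rr q j) j) \<noteq> (v j \<and> Mmat (Suc d) (rr (q+e) j) j)) = False"
          using x by (simp add: mult_2)
        then have fst: "\<not> par e (\<lambda>j. (v j \<and> Mmat (Suc d) (rr q j) j) \<noteq> (v j \<and> Mmat (Suc d) (rr (q+e) j) j))"
          using sec unfolding par_add by simp
        have "par e (\<lambda>j. (v j \<and> Mmat (Suc d) (rr q j) j) \<noteq> (v j \<and> Mmat (Suc d) (rr (q+e) j) j))
              = par e (\<lambda>j. v j \<and> Mmat d ((q + 2 ^ d - (\<mu> j + c') mod 2 ^ d) mod 2 ^ d) j)"
        proof (rule par_cong)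
          fix j assume j: "j < e"
          have nm: "\<nu> (e-1) \<le> \<nu> j" using suit_mono[OF suit, of j "e-1"] j by simp
          have eqa: "(\<mu> j + c') = \<nu> j + c" unfolding \<mu>_def c'_def using nm by simp
          have fl: "(Mmat (Suc d) (rr q j) j \<noteq> Mmat (Suc d) (rr (q+e) j) j) = Mmat d ((q + e - (\<nu> j + c) mod e) mod e) j"
            using fold_lemma[of j d q "\<nu> j + c"] j qe unfolding rr_def e_def by (simp add: add.assoc)
          show "((v j \<and> Mmat (Suc d) (rr q j) j) \<noteq> (v j \<and> Mmat (Suc d) (rr (q+e) j) j))
              = (v j \<and> Mmat d ((q + 2 ^ d - (\<mu> j + c') mod 2 ^ d) mod 2 ^ d) j)"
            using fl eqa unfolding e_def by auto
        qed
        then show "\<not> par (2 ^ d) (\<lambda>j. v j \<and> Mmat d ((q + 2 ^ d - (\<mu> j + c') mod 2 ^ d) mod 2 ^ d) j)"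
          using fst unfolding e_def by simp
      qed
    qed
  qed
  have shi: "suitable (2^d) (\<lambda>j. \<nu> (j + e))" using suit_hi[OF suit e0] e_def by simp
  have highfalse: "\<not> v (j + e)" if j: "j < e" for j
  proof (rule Suc.IH[OF shi, of "\<lambda>j. v (j+e)" c])
    show "j < 2^d" using j e_def by simp
    show "\<forall>q<2 ^ d. \<not> par (2 ^ d) (\<lambda>j. v (j + e) \<and> Mmat d ((q + 2 ^ d - (\<nu> (j + e) + c) mod 2 ^ d) mod 2 ^ d) j)"
    proof (intro allI impI)
      fix q :: nat assume q: "q < 2^d"
      then have qe: "q < 2*e" using e_def by simp
      have "par (e + e) (\<lambda>j. v j \<and> Mmat (Suc d) (rr q j) j) = False" using H[OF qe] by (simp add: mult_2)
      moreover have "par e (\<lambda>j. v j \<and> Mmat (Suc d) (rr q j) j) = False"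
        using lowfalse by (simp add: par_cong[of e _ "\<lambda>_. False"])
      ultimately have "\<not> par e (\<lambda>j. v (j+e) \<and> Mmat (Suc d) (rr q (j+e)) (j+e))"
        unfolding par_add by simp
      moreover have "par e (\<lambda>j. v (j+e) \<and> Mmat (Suc d) (rr q (j+e)) (j+e)) =
          par e (\<lambda>j. v (j + e) \<and> Mmat d ((q + 2 ^ d - (\<nu> (j + e) + c) mod 2 ^ d) mod 2 ^ d) j)"
      proof (rule par_cong)
        fix j assume "j < e"
        then show "(v (j+e) \<and> Mmat (Suc d) (rr q (j+e)) (j+e)) =
          (v (j + e) \<and> Mmat d ((q + 2 ^ d - (\<nu> (j + e) + c) mod 2 ^ d) mod 2 ^ d) j)"
          using hi[of j q] unfolding e_def by simp
      qed
      ultimately show "\<not> par (2 ^ d) (\<lambda>j. v (j + e) \<and> Mmat d ((q + 2 ^ d - (\<nu> (j + e) + c) mod 2 ^ d) mod 2 ^ d) j)"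
        unfolding e_def by simp
    qed
  qed
  show ?case
  proof (cases "j < e")
    case True then show ?thesis using lowfalse by simp
  next
    case False
    then have j1: "j - e < e" and j2: "j = (j - e) + e" using Suc.prems(3) E by auto
    have "\<not> v ((j - e) + e)" using highfalse[OF j1] .
    then show ?thesis using j2[symmetric] by simp
  qed
qed




definition vx :: "(nat \<Rightarrow> bool) \<Rightarrow> (nat \<Rightarrow> bool) \<Rightarrow> nat \<Rightarrow> bool" where
  "vx v w = (\<lambda>k. v k \<noteq> w k)"

definition vecs :: "nat \<Rightarrow> (nat \<Rightarrow> bool) set" where
  "vecs n = {v. \<forall>k. n \<le> k \<longrightarrow> \<not> v k}"

lemma vecs_img: "vecs n = (\<lambda>S k. k \<in> S) ` Pow {..<n}"
proof
  show "vecs n \<subseteq> (\<lambda>S k. k \<in> S) ` Pow {..<n}"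
  proof
    fix v assume "v \<in> vecs n"
    then have "{k. v k} \<in> Pow {..<n}" unfolding vecs_def by (auto simp: not_le[symmetric])
    moreover have "v = (\<lambda>k. k \<in> {k. v k})" by simp
    ultimately show "v \<in> (\<lambda>S k. k \<in> S) ` Pow {..<n}" by blast
  qed
  show "(\<lambda>S k. k \<in> S) ` Pow {..<n} \<subseteq> vecs n" unfolding vecs_def by auto
qed

lemma vecs_finite: "finite (vecs n)" unfolding vecs_img by simp

lemma vecs_card: "card (vecs n) = 2^n"
proof -
  have "inj_on (\<lambda>S k. k \<in> S) (Pow {..<n})"
  proof (rule inj_onI)
    fix S S' assume "(\<lambda>k. k \<in> S) = (\<lambda>k. k \<in> S')"
    then show "S = S'" by (simp add: fun_eq_iff set_eq_iff)
  qed
  then show ?thesis unfolding vecs_img by (simp add: card_image card_Pow)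
qed

lemma vx_vecs: "v \<in> vecs n \<Longrightarrow> w \<in> vecs n \<Longrightarrow> vx v w \<in> vecs n"
  unfolding vecs_def vx_def by auto

lemma vx_self[simp]: "vx (vx u p) p = u" unfolding vx_def by auto

lemma wvec_inj:
  assumes "i < 2^e" "i' < 2^e" "\<forall>k<e. wvec e i k = wvec e i' k"
  shows "i = i'"
proof (rule bit_eqI)
  fix m
  assume "possible_bit TYPE(nat) m"
  show "bit i m = bit i' m"
  proof (cases "m < e")
    case True
    have "e - 1 - (e - 1 - m) = m" using True by simp
    then show ?thesis using assms(3)[rule_format, of "e - 1 - m"] True
      unfolding wvec_def bit_iff_odd by simp
  next
    case False
    then have "(2::nat)^e \<le> 2^m" by simp
    then have "i < 2^m" "i' < 2^m" using assms(1,2) by linarith+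
    then have "i div 2^m = 0" "i' div 2^m = 0" by simp_all
    then show ?thesis unfolding bit_iff_odd by simp
  qed
qed

lemma wvec_surj:
  assumes "y \<in> vecs e"
  shows "\<exists>i<2^e. \<forall>k<e. wvec e i k = y k"
proof -
  define W where "W i = (\<lambda>k. k < e \<and> wvec e i k)" for i
  have inj: "inj_on W {..<2^e}"
  proof (rule inj_onI)
    fix i i' assume "i \<in> {..<2^e}" "i' \<in> {..<2^e}" "W i = W i'"
    then have "i < 2^e" "i' < 2^e" "\<forall>k<e. wvec e i k = wvec e i' k"
      unfolding W_def by (auto simp: fun_eq_iff)
    then show "i = i'" by (rule wvec_inj)
  qed
  have sub: "W ` {..<2^e} \<subseteq> vecs e" unfolding W_def vecs_def by auto
  have "card (W ` {..<2^e}) = 2^e" using inj by (simp add: card_image)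
  then have "W ` {..<2^e} = vecs e" using card_subset_eq[OF vecs_finite sub] vecs_card by simp
  then have "y \<in> W ` {..<2^e}" using assms by simp
  then obtain i where i: "i < 2^e" "W i = y" by auto
  have "\<forall>k<e. wvec e i k = y k"
  proof (intro allI impI)
    fix k assume "k < e"
    then show "wvec e i k = y k" using fun_cong[OF i(2), of k] unfolding W_def by simp
  qed
  then show ?thesis using i(1) by blast
qed

lemma wvec_succ:
  assumes "even i" "k < e"
  shows "wvec e (i+1) k = (wvec e i k \<noteq> (k = e - 1))"
proof (cases "k = e - 1")
  case True then show ?thesis using assms unfolding wvec_def by simp
next
  case False
  define m where "m = e - 1 - k"
  have m0: "0 < m" using False assms unfolding m_def by simp
  obtain a where a: "i = 2*a" using assms(1) by blast
  have p: "(2::nat)^m = 2 * 2^(m-1)" using m0 by (cases m) auto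
  have "(i+1) div 2^m = i div 2^m"
    unfolding a p by (simp add: div_mult2_eq)
  then show ?thesis using False unfolding wvec_def m_def by simp
qed




locale neck =
  fixes d :: nat and \<nu> :: "nat \<Rightarrow> nat" and z :: "nat \<Rightarrow> bool"
  assumes suit: "suitable (2^d) \<nu>" and d1: "1 \<le> d"
begin

abbreviation e :: nat where "e \<equiv> 2^d"

definition Mv :: "(nat \<Rightarrow> bool) \<Rightarrow> nat \<Rightarrow> bool" where
  "Mv v = (\<lambda>q. q < e \<and> par e (\<lambda>j. Mnu d \<nu> q j \<and> v j))"

lemma e_pos: "0 < e" by simp
lemma e_even: "even e" using d1 by (simp add: Suc_le_eq)

lemma Mv_vecs: "Mv v \<in> vecs e" unfolding Mv_def vecs_def by simp

lemma Mv_lin: "Mv (vx v w) = vx (Mv v) (Mv w)"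
proof -
  have "par e (\<lambda>j. Mnu d \<nu> q j \<and> vx v w j) = (par e (\<lambda>j. Mnu d \<nu> q j \<and> v j) \<noteq> par e (\<lambda>j. Mnu d \<nu> q j \<and> w j))" for q
  proof -
    have "par e (\<lambda>j. Mnu d \<nu> q j \<and> vx v w j) = par e (\<lambda>j. (Mnu d \<nu> q j \<and> v j) \<noteq> (Mnu d \<nu> q j \<and> w j))"
      by (rule par_cong) (auto simp: vx_def)
    then show ?thesis by (simp only: par_xor)
  qed
  then show ?thesis unfolding Mv_def vx_def by (auto simp: fun_eq_iff)
qed

lemma Mv_cong: "(\<And>j. j < e \<Longrightarrow> v j = w j) \<Longrightarrow> Mv v = Mv w"
  unfolding Mv_def by (simp add: fun_eq_iff cong: par_cong)

lemma Mnu_expand: "Mnu d \<nu> q j = Mmat d ((q + e - (\<nu> j + 0) mod e) mod e) j"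
  unfolding Mnu_def rot_col_def by simp

lemma Mv_inj: "inj_on Mv (vecs e)"
proof (rule inj_onI)
  fix v w assume v: "v \<in> vecs e" and w: "w \<in> vecs e" and eq: "Mv v = Mv w"
  have "Mv (vx v w) = vx (Mv v) (Mv w)" by (rule Mv_lin)
  also have "\<dots> = (\<lambda>_. False)" using eq by (simp add: vx_def fun_eq_iff)
  finally have z0: "Mv (vx v w) = (\<lambda>_. False)" .
  have "\<forall>q<e. \<not> par e (\<lambda>j. vx v w j \<and> Mmat d ((q + e - (\<nu> j + 0) mod e) mod e) j)"
  proof (intro allI impI)
    fix q assume q: "q < e"
    have "\<not> par e (\<lambda>j. Mnu d \<nu> q j \<and> vx v w j)" using fun_cong[OF z0, of q] q unfolding Mv_def by simp
    then show "\<not> par e (\<lambda>j. vx v w j \<and> Mmat d ((q + e - (\<nu> j + 0) mod e) mod e) j)"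
      unfolding Mnu_expand by (simp add: conj_commute)
  qed
  then have "\<forall>j<e. \<not> vx v w j" using inj_core[OF suit] by blast
  then have lt: "\<forall>j<e. v j = w j" unfolding vx_def by simp
  show "v = w"
  proof
    fix j show "v j = w j"
    proof (cases "j < e")
      case True then show ?thesis using lt by simp
    next
      case False then show ?thesis using v w unfolding vecs_def by simp
    qed
  qed
qed

lemma Mv_surj: "Mv ` vecs e = vecs e"
  using endo_inj_surj[OF vecs_finite _ Mv_inj] Mv_vecs by blast

definition invM :: "(nat \<Rightarrow> bool) \<Rightarrow> nat \<Rightarrow> bool" where
  "invM u = the_inv_into (vecs e) Mv u"

lemma invM_vecs: "u \<in> vecs e \<Longrightarrow> invM u \<in> vecs e"
  unfolding invM_def using the_inv_into_into[OF Mv_inj] Mv_surj by blast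

lemma Mv_invM: "u \<in> vecs e \<Longrightarrow> Mv (invM u) = u"
  unfolding invM_def using f_the_inv_into_f[OF Mv_inj] Mv_surj by blast

lemma invM_Mv: "x \<in> vecs e \<Longrightarrow> invM (Mv x) = x"
  unfolding invM_def using the_inv_into_f_f[OF Mv_inj] by blast

lemma invM_lin: "u \<in> vecs e \<Longrightarrow> u' \<in> vecs e \<Longrightarrow> invM (vx u u') = vx (invM u) (invM u')"
proof -
  assume u: "u \<in> vecs e" and u': "u' \<in> vecs e"
  have "Mv (vx (invM u) (invM u')) = vx u u'" using Mv_lin Mv_invM u u' by simp
  then have "invM (vx u u') = invM (Mv (vx (invM u) (invM u')))" by simp
  also have "\<dots> = vx (invM u) (invM u')" using invM_Mv vx_vecs invM_vecs u u' by simp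
  finally show ?thesis .
qed

definition lam :: "(nat \<Rightarrow> bool) \<Rightarrow> bool" where "lam u = invM u (e - 1)"

lemma lam_lin: "u \<in> vecs e \<Longrightarrow> u' \<in> vecs e \<Longrightarrow> lam (vx u u') = (lam u \<noteq> lam u')"
  unfolding lam_def using invM_lin by (simp add: vx_def)

definition dl :: "nat \<Rightarrow> nat \<Rightarrow> bool" where "dl k = (\<lambda>j. j = k)"
definition one :: "nat \<Rightarrow> bool" where "one = (\<lambda>k. k < e)"

lemma dl_vecs: "k < e \<Longrightarrow> dl k \<in> vecs e" unfolding dl_def vecs_def by auto
lemma one_vecs: "one \<in> vecs e" unfolding one_def vecs_def by auto

lemma Mv_dl_last: "Mv (dl (e - 1)) = one"
proof -
  have "par e (\<lambda>j. Mnu d \<nu> q j \<and> dl (e-1) j) = True" if "q < e" for q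
  proof -
    have "par e (\<lambda>j. Mnu d \<nu> q j \<and> dl (e-1) j) = par e (\<lambda>j. j = e - 1 \<and> Mnu d \<nu> q j)"
      by (rule par_cong) (auto simp: dl_def)
    also have "\<dots> = Mnu d \<nu> q (e - 1)" by (rule par_single) simp
    also have "\<dots> = True" unfolding Mnu_expand using Mmat_last by simp
    finally show ?thesis .
  qed
  then show ?thesis unfolding Mv_def one_def by (auto simp: fun_eq_iff)
qed

lemma lam_one: "lam one"
proof -
  have "invM one = dl (e - 1)" using invM_Mv[OF dl_vecs, of "e-1"] Mv_dl_last by simp
  then show ?thesis unfolding lam_def dl_def by simp
qed

definition R :: "(nat \<Rightarrow> bool) \<Rightarrow> nat \<Rightarrow> bool" where
  "R u = (\<lambda>q. q < e \<and> u (Suc q mod e))"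

lemma R_vecs: "R u \<in> vecs e" unfolding R_def vecs_def by simp
lemma R_lin: "R (vx u u') = vx (R u) (R u')" unfolding R_def vx_def by (auto simp: fun_eq_iff)
lemma R_one: "R one = one" unfolding R_def one_def by (auto simp: fun_eq_iff)
lemma R_dl: "Suc q < e \<Longrightarrow> R (dl (Suc q)) = dl q"
proof -
  assume a: "Suc q < e"
  have "(q' < e \<and> Suc q' mod e = Suc q) = (q' = q)" for q'
  proof (cases "Suc q' < e")
    case True then show ?thesis by simp
  next
    case False
    then show ?thesis using a by (cases "Suc q' = e") auto
  qed
  then show ?thesis unfolding R_def dl_def by (auto simp: fun_eq_iff)
qed

lemma separating: "\<exists>u\<in>vecs e. lam u \<noteq> lam (R u)"
proof (rule ccontr)
  assume "\<not> ?thesis"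
  then have inv: "\<And>u. u \<in> vecs e \<Longrightarrow> lam (R u) = lam u" by blast
  have step: "lam (dl q) = lam (dl (Suc q))" if "Suc q < e" for q
    using inv[OF dl_vecs[OF that]] R_dl[OF that] by simp
  have all: "q < e \<Longrightarrow> lam (dl q) = lam (dl 0)" for q
  proof (induction q)
    case 0 then show ?case by simp
  next
    case (Suc q) then show ?case using step[of q] by simp
  qed
  have part: "m \<le> e \<Longrightarrow> lam (\<lambda>k. k < m) = par m (\<lambda>q. lam (dl q))" for m
  proof (induction m)
    case 0
    have "(\<lambda>k::nat. k < 0) = vx one one" unfolding vx_def by simp
    then show ?case using lam_lin[OF one_vecs one_vecs] by simp
  next
    case (Suc m)
    have eq: "(\<lambda>k. k < Suc m) = vx (\<lambda>k. k < m) (dl m)" unfolding vx_def dl_def by (auto simp: fun_eq_iff)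
    have v1: "(\<lambda>k. k < m) \<in> vecs e" using Suc.prems unfolding vecs_def by auto
    have v2: "dl m \<in> vecs e" using Suc.prems dl_vecs by simp
    show ?case unfolding eq lam_lin[OF v1 v2] par_Suc using Suc by simp
  qed
  have "lam one = par e (\<lambda>q. lam (dl q))" using part[of e] unfolding one_def by simp
  also have "\<dots> = par e (\<lambda>_. lam (dl 0))" by (rule par_cong) (rule all)
  also have "\<dots> = False" using e_even by (simp add: par_const)
  finally show False using lam_one by simp
qed

end



context neck begin

definition Cl :: "bool \<Rightarrow> bool \<Rightarrow> (nat \<Rightarrow> bool) set" where
  "Cl a b = {u \<in> vecs e. lam u = a \<and> lam (R u) = b}"

lemma Cl_finite: "finite (Cl a b)" unfolding Cl_def using vecs_finite by simp

lemma vx_inj: "inj_on (\<lambda>u. vx u p) A"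
proof (rule inj_onI)
  fix u u' assume "vx u p = vx u' p"
  then have "vx (vx u p) p = vx (vx u' p) p" by simp
  then show "u = u'" by simp
qed

lemma Cl_le1:
  assumes p: "p \<in> vecs e" "lam p" "\<not> lam (R p)"
  shows "card (Cl a b) \<le> card (Cl (\<not> a) b)"
proof -
  have "(\<lambda>u. vx u p) ` Cl a b \<subseteq> Cl (\<not> a) b"
  proof
    fix x assume "x \<in> (\<lambda>u. vx u p) ` Cl a b"
    then obtain u where u: "u \<in> Cl a b" "x = vx u p" by blast
    then have uv: "u \<in> vecs e" "lam u = a" "lam (R u) = b" unfolding Cl_def by auto
    have "lam (vx u p) = (\<not> a)" using lam_lin[OF uv(1) p(1)] uv p by simp
    moreover have "lam (R (vx u p)) = b" using lam_lin[OF R_vecs R_vecs, of u p] uv p R_lin by simp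
    ultimately show "x \<in> Cl (\<not> a) b" using u(2) vx_vecs[OF uv(1) p(1)] unfolding Cl_def by simp
  qed
  then have "card ((\<lambda>u. vx u p) ` Cl a b) \<le> card (Cl (\<not> a) b)" by (rule card_mono[OF Cl_finite])
  then show ?thesis using card_image[OF vx_inj] by simp
qed

lemma Cl_le2:
  assumes p: "p \<in> vecs e" "\<not> lam p" "lam (R p)"
  shows "card (Cl a b) \<le> card (Cl a (\<not> b))"
proof -
  have "(\<lambda>u. vx u p) ` Cl a b \<subseteq> Cl a (\<not> b)"
  proof
    fix x assume "x \<in> (\<lambda>u. vx u p) ` Cl a b"
    then obtain u where u: "u \<in> Cl a b" "x = vx u p" by blast
    then have uv: "u \<in> vecs e" "lam u = a" "lam (R u) = b" unfolding Cl_def by auto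
    have "lam (vx u p) = a" using lam_lin[OF uv(1) p(1)] uv p by simp
    moreover have "lam (R (vx u p)) = (\<not> b)" using lam_lin[OF R_vecs R_vecs, of u p] uv p R_lin by simp
    ultimately show "x \<in> Cl a (\<not> b)" using u(2) vx_vecs[OF uv(1) p(1)] unfolding Cl_def by simp
  qed
  then have "card ((\<lambda>u. vx u p) ` Cl a b) \<le> card (Cl a (\<not> b))" by (rule card_mono[OF Cl_finite])
  then show ?thesis using card_image[OF vx_inj] by simp
qed

lemma pq_exist: "\<exists>p q. p \<in> vecs e \<and> lam p \<and> \<not> lam (R p) \<and> q \<in> vecs e \<and> \<not> lam q \<and> lam (R q)"
proof -
  obtain u where u: "u \<in> vecs e" "lam u \<noteq> lam (R u)" using separating by blast
  have o1: "lam (vx u one) = (\<not> lam u)" using lam_lin[OF u(1) one_vecs] lam_one by simp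
  have o2: "lam (R (vx u one)) = (\<not> lam (R u))" using lam_lin[OF R_vecs one_vecs, of u] lam_one R_lin R_one by simp
  have v: "vx u one \<in> vecs e" using vx_vecs[OF u(1) one_vecs] .
  show ?thesis
  proof (cases "lam u")
    case True then show ?thesis using u v o1 o2 by blast
  next
    case False then show ?thesis using u v o1 o2 by blast
  qed
qed

lemma Cl_card: "4 * card (Cl a b) = 2^e"
proof -
  obtain p q where pq: "p \<in> vecs e" "lam p" "\<not> lam (R p)" "q \<in> vecs e" "\<not> lam q" "lam (R q)"
    using pq_exist by blast
  have c1: "card (Cl a b) = card (Cl (\<not> a) b)" for a b
    using Cl_le1[OF pq(1-3), of a b] Cl_le1[OF pq(1-3), of "\<not> a" b] by simp
  have c2: "card (Cl a b) = card (Cl a (\<not> b))" for a b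
    using Cl_le2[OF pq(4-6), of a b] Cl_le2[OF pq(4-6), of a "\<not> b"] by simp
  have call: "card (Cl a b) = card (Cl True True)" for a b
    using c1 c2 by (cases a; cases b) metis+
  have part: "vecs e = (Cl True True \<union> Cl True False) \<union> (Cl False True \<union> Cl False False)"
    unfolding Cl_def by auto
  have f: "finite (Cl a b)" for a b by (rule Cl_finite)
  have u1: "card (Cl True True \<union> Cl True False) = card (Cl True True) + card (Cl True False)"
    by (rule card_Un_disjoint[OF f f]) (auto simp: Cl_def)
  have u2: "card (Cl False True \<union> Cl False False) = card (Cl False True) + card (Cl False False)"
    by (rule card_Un_disjoint[OF f f]) (auto simp: Cl_def)
  have u3: "card ((Cl True True \<union> Cl True False) \<union> (Cl False True \<union> Cl False False)) =
     card (Cl True True \<union> Cl True False) + card (Cl False True \<union> Cl False False)"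
    by (rule card_Un_disjoint) (use f in auto, auto simp: Cl_def)
  have "card (vecs e) = (card (Cl True True) + card (Cl True False)) + (card (Cl False True) + card (Cl False False))"
    using u1 u2 u3 part by simp
  then show ?thesis using call[of a b] call[of True False] call[of False True] call[of False False] vecs_card by simp
qed

end



lemma concat_len: "(\<And>n. n < M \<Longrightarrow> length (f n) = e) \<Longrightarrow> length (concat (map f [0..<M])) = M * e"
  by (induction M) auto

lemma concat_nth:
  assumes "\<And>n. n < M \<Longrightarrow> length (f n) = e" "n < M" "q < e"
  shows "concat (map f [0..<M]) ! (n*e+q) = f n ! q"
  using assms
proof (induction M)
  case 0 then show ?case by simp
next
  case (Suc M)
  have l: "length (concat (map f [0..<M])) = M * e" using Suc.prems(1) by (intro concat_len) simp
  show ?case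
  proof (cases "n < M")
    case True
    have "n*e + q < M * e"
    proof -
      have "n*e + q < n*e + e" using Suc.prems(3) by simp
      also have "\<dots> = Suc n * e" by simp
      also have "\<dots> \<le> M * e" using True by (intro mult_right_mono) auto
      finally show ?thesis .
    qed
    then show ?thesis using Suc True l by (simp add: nth_append)
  next
    case False
    then have "n = M" using Suc.prems(2) by simp
    then show ?thesis using l by (simp add: nth_append)
  qed
qed

context neck begin

definition X :: "nat \<Rightarrow> nat \<Rightarrow> bool" where "X i = (\<lambda>k. wvec e i k \<noteq> z k)"
definition Bf :: "nat \<Rightarrow> nat \<Rightarrow> bool" where "Bf i = Mv (X i)"
definition T :: "(nat \<Rightarrow> bool) \<Rightarrow> nat \<Rightarrow> bool" where "T u = vx (R u) (dl (e - 1))"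

lemma word_len: "length (necklace_word d \<nu> z) = 2^e * e"
  unfolding necklace_word_def by (rule concat_len) simp

lemma word_nth: "i < 2^e \<Longrightarrow> q < e \<Longrightarrow> necklace_word d \<nu> z ! (i*e + q) = Bf i q"
  unfolding necklace_word_def
  by (subst concat_nth[where e=e]) (auto simp: Bf_def Mv_def X_def matvec_def par_def)

lemma T_vecs: "T u \<in> vecs e" unfolding T_def using vx_vecs[OF R_vecs dl_vecs] by simp

lemma T_eval: "q < e \<Longrightarrow> T u q = (if q < e - 1 then u (Suc q) else \<not> u 0)"
proof -
  assume q: "q < e"
  show ?thesis
  proof (cases "q < e - 1")
    case True
    then have "Suc q mod e = Suc q" by simp
    then show ?thesis using True q unfolding T_def R_def vx_def dl_def by simp
  next
    case False
    then have "q = e - 1" using q by simp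
    then have "Suc q mod e = 0" using e_pos by simp
    then show ?thesis using False q \<open>q = e - 1\<close> unfolding T_def R_def vx_def dl_def by simp
  qed
qed

lemma lam_T: "u \<in> vecs e \<Longrightarrow> lam (T u) = (lam (R u) \<noteq> lam (dl (e - 1)))"
  unfolding T_def using lam_lin[OF R_vecs dl_vecs] by simp

lemma Bf_vecs: "Bf i \<in> vecs e" unfolding Bf_def by (rule Mv_vecs)

lemma Bf_lam: "lam (Bf i) = X i (e - 1)"
proof -
  define Xr where "Xr = (\<lambda>k. k < e \<and> X i k)"
  have xr: "Xr \<in> vecs e" unfolding Xr_def vecs_def by simp
  have "Bf i = Mv Xr" unfolding Bf_def Xr_def by (rule Mv_cong) simp
  then have "invM (Bf i) = Xr" using invM_Mv[OF xr] by simp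
  then show ?thesis unfolding lam_def Xr_def by simp
qed

lemma even_iff: "even i \<longleftrightarrow> lam (Bf i) = z (e - 1)"
  unfolding Bf_lam X_def wvec_def by (cases "z (e - 1)") auto

lemma Bf_surj: "u \<in> vecs e \<Longrightarrow> \<exists>i<2^e. Bf i = u"
proof -
  assume u: "u \<in> vecs e"
  define x where "x = invM u"
  have x: "x \<in> vecs e" "Mv x = u" unfolding x_def using invM_vecs Mv_invM u by auto
  have "(\<lambda>k. k < e \<and> (x k \<noteq> z k)) \<in> vecs e" unfolding vecs_def by simp
  then obtain i where i: "i < 2^e" "\<forall>k<e. wvec e i k = (k < e \<and> (x k \<noteq> z k))"
    using wvec_surj by blast
  have "Bf i = Mv x" unfolding Bf_def using i(2) by (intro Mv_cong) (auto simp: X_def)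
  then show ?thesis using i(1) x by blast
qed

lemma Bf_succ: "even i \<Longrightarrow> Bf (Suc i) = vx (Bf i) one"
proof -
  assume ev: "even i"
  have "Bf (Suc i) = Mv (vx (X i) (dl (e - 1)))"
    unfolding Bf_def using wvec_succ[OF ev] by (intro Mv_cong) (auto simp: X_def vx_def dl_def)
  also have "\<dots> = vx (Bf i) one" unfolding Mv_lin Bf_def Mv_dl_last ..
  finally show ?thesis .
qed

definition Ibig :: "nat set" where
  "Ibig = {i. i < 2^e \<and> even i \<and> (\<exists>j<2^e. even j \<and> Bf j = T (Bf i))}"

lemma Ibig_card: "2^e \<le> 4 * card Ibig"
proof -
  define b where "b = z (e - 1)"
  define U where "U = Cl b (b \<noteq> lam (dl (e - 1)))"
  have "U \<subseteq> Bf ` Ibig"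
  proof
    fix u assume "u \<in> U"
    then have u: "u \<in> vecs e" "lam u = b" "lam (R u) = (b \<noteq> lam (dl (e - 1)))"
      unfolding U_def Cl_def by auto
    obtain i where i: "i < 2^e" "Bf i = u" using Bf_surj[OF u(1)] by blast
    obtain j where j: "j < 2^e" "Bf j = T u" using Bf_surj[OF T_vecs] by blast
    have ei: "even i" using even_iff i u b_def by simp
    have "lam (T u) = b" using lam_T[OF u(1)] u(3) by (cases b; cases "lam (dl (e - 1))") auto
    then have ej: "even j" using even_iff j b_def by simp
    have "i \<in> Ibig" unfolding Ibig_def using i j ei ej by auto
    then show "u \<in> Bf ` Ibig" using i by blast
  qed
  have fin: "finite Ibig" unfolding Ibig_def by simp
  have "card U \<le> card (Bf ` Ibig)" using \<open>U \<subseteq> Bf ` Ibig\<close> fin by (intro card_mono) auto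
  also have "\<dots> \<le> card Ibig" using fin by (rule card_image_le)
  finally have "card U \<le> card Ibig" .
  moreover have "4 * card U = 2^e" unfolding U_def by (rule Cl_card)
  ultimately show ?thesis by simp
qed

end



context neck begin

lemma even_succ_lt: "even i \<Longrightarrow> i < 2^e \<Longrightarrow> Suc i < 2^e"
proof -
  assume a: "even i" "i < 2^e"
  have "even ((2::nat)^e)" using e_pos by simp
  have "Suc i \<noteq> 2^e"
  proof
    assume "Suc i = 2^e"
    then have "even (Suc i)" using \<open>even ((2::nat)^e)\<close> by simp
    then show False using a(1) by simp
  qed
  then show ?thesis using a(2) by simp
qed

lemma Bf_neg: "even i \<Longrightarrow> r < e \<Longrightarrow> Bf (Suc i) r = (\<not> Bf i r)"
  using Bf_succ[of i] unfolding vx_def one_def by simp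

lemma window:
  assumes i: "i < 2^e" "even i" and j: "j < 2^e" "even j" "Bf j = T (Bf i)"
    and t: "1 \<le> t" "t + k \<le> e" and p: "p < e + k"
  shows "necklace_word d \<nu> z ! (i*e + t + p) = necklace_word d \<nu> z ! (j*e + (t - 1) + p)"
proof -
  have si: "Suc i < 2^e" using even_succ_lt i by simp
  have sj: "Suc j < 2^e" using even_succ_lt j by simp
  have Tq: "Bf j q = (if q < e - 1 then Bf i (Suc q) else \<not> Bf i 0)" if "q < e" for q
    using T_eval[OF that] j(3) by simp
  show ?thesis
  proof (cases "t + p < e")
    case True
    have l: "necklace_word d \<nu> z ! (i*e + t + p) = Bf i (t + p)"
      using word_nth[OF i(1) True] by (simp add: add.assoc)
    have q: "t - 1 + p < e - 1" using True t by simp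
    have r: "necklace_word d \<nu> z ! (j*e + (t - 1) + p) = Bf j (t - 1 + p)"
      using word_nth[OF j(1), of "t - 1 + p"] q by (simp add: add.assoc)
    have "Suc (t - 1 + p) = t + p" using t by simp
    then show ?thesis using l r Tq[of "t - 1 + p"] q by simp
  next
    case False
    define r where "r = t + p - e"
    have rl: "r < e" using False t p unfolding r_def by auto
    have eq1: "i*e + t + p = Suc i * e + r" using False unfolding r_def by simp
    have l: "necklace_word d \<nu> z ! (i*e + t + p) = (\<not> Bf i r)"
      unfolding eq1 using word_nth[OF si rl(1)] Bf_neg[OF i(2) rl(1)] by simp
    show ?thesis
    proof (cases "r = 0")
      case True
      then have eq3: "j*e + (t - 1) + p = j*e + (e - 1)" using False t unfolding r_def by simp
      have "necklace_word d \<nu> z ! (j*e + (t - 1) + p) = Bf j (e - 1)"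
        unfolding eq3 using word_nth[OF j(1), of "e - 1"] e_pos by simp
      also have "\<dots> = (\<not> Bf i 0)" using Tq[of "e - 1"] e_pos by simp
      finally show ?thesis using l True by simp
    next
      case False
      have eq2: "j*e + (t - 1) + p = Suc j * e + (r - 1)" using \<open>\<not> t + p < e\<close> t False unfolding r_def by simp
      have r1: "r - 1 < e" "r - 1 < e - 1" using rl False by auto
      have "necklace_word d \<nu> z ! (j*e + (t - 1) + p) = (\<not> Bf j (r - 1))"
        unfolding eq2 using word_nth[OF sj r1(1)] Bf_neg[OF j(2) r1(1)] by simp
      also have "\<dots> = (\<not> Bf i r)" using Tq[of "r - 1"] r1 False by simp
      finally show ?thesis using l by simp
    qed
  qed
qed

end



definition ab :: "(nat \<Rightarrow> bool) \<Rightarrow> nat \<Rightarrow> real" where "ab \<rho> k = (if \<rho> k then 1 else 0)"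
definition tail :: "(nat \<Rightarrow> bool) \<Rightarrow> nat \<Rightarrow> real" where
  "tail \<rho> n = (\<Sum>p. ab \<rho> (n + p) / 2^(p+1))"

lemma half_sums: "summable (\<lambda>p. (1/2::real)^Suc p)" "(\<Sum>p. (1/2::real)^Suc p) = 1"
  using power_half_series by (auto simp: sums_iff)

lemma ab_bounds: "0 \<le> ab \<rho> k" "ab \<rho> k \<le> 1" unfolding ab_def by auto

lemma term_le: "ab \<rho> k / 2^(p+1) \<le> (1/2::real)^Suc p"
proof -
  have "ab \<rho> k / 2^(p+1) \<le> 1 / 2^(p+1)" using ab_bounds[of \<rho> k] by (simp add: divide_right_mono)
  then show ?thesis by (simp add: power_one_over)
qed

lemma tail_summable: "summable (\<lambda>p. ab \<rho> (n + p) / 2^(p+1))"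
proof (rule summable_comparison_test'[OF half_sums(1)])
  fix p :: nat
  show "norm (ab \<rho> (n + p) / 2^(p+1)) \<le> (1/2)^Suc p"
    using term_le[of \<rho> "n+p" p] ab_bounds[of \<rho> "n+p"] by simp
qed

lemma tail_nonneg: "0 \<le> tail \<rho> n"
  unfolding tail_def by (rule suminf_nonneg[OF tail_summable]) (simp add: ab_bounds)

lemma tail_le1: "tail \<rho> n \<le> 1"
proof -
  have "tail \<rho> n \<le> (\<Sum>p. (1/2::real)^Suc p)"
    unfolding tail_def by (rule suminf_le[OF _ tail_summable half_sums(1)]) (rule term_le)
  then show ?thesis using half_sums(2) by simp
qed

lemma tail_split: "tail \<rho> n = (\<Sum>p<m. ab \<rho> (n + p) / 2^(p+1)) + tail \<rho> (n + m) / 2^m"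
proof -
  have "tail \<rho> n = (\<Sum>p. ab \<rho> (n + (p + m)) / 2^(p + m + 1)) + (\<Sum>p<m. ab \<rho> (n + p) / 2^(p+1))"
    unfolding tail_def by (rule suminf_split_initial_segment[OF tail_summable])
  also have "(\<Sum>p. ab \<rho> (n + (p + m)) / 2^(p + m + 1)) = (\<Sum>p. ab \<rho> (n + m + p) / 2^(p + 1) / 2^m)"
    by (simp add: power_add algebra_simps)
  also have "\<dots> = tail \<rho> (n + m) / 2^m"
    unfolding tail_def by (rule suminf_divide[OF tail_summable])
  finally show ?thesis by simp
qed

lemma tail_close:
  assumes "\<forall>p<m. \<rho> (n + p) = \<rho> (n' + p)"
  shows "\<bar>tail \<rho> n - tail \<rho> n'\<bar> \<le> 1 / 2^m"
proof -
  have s: "(\<Sum>p<m. ab \<rho> (n + p) / 2^(p+1)) = (\<Sum>p<m. ab \<rho> (n' + p) / 2^(p+1))"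
    using assms by (intro sum.cong) (auto simp: ab_def)
  have "tail \<rho> n - tail \<rho> n' = (tail \<rho> (n + m) - tail \<rho> (n' + m)) / 2^m"
    using tail_split[of \<rho> n m] tail_split[of \<rho> n' m] s by (simp add: diff_divide_distrib)
  moreover have "\<bar>tail \<rho> (n + m) - tail \<rho> (n' + m)\<bar> \<le> 1"
    using tail_nonneg tail_le1 by (simp add: abs_le_iff) (meson tail_le1 tail_nonneg add_increasing2 diff_le_eq)
  ultimately show ?thesis by (simp add: divide_right_mono)
qed

lemma word_real_tail: "word_real \<rho> = tail \<rho> 0"
  unfolding word_real_def tail_def ab_def by simp

lemma shift_tail: "\<exists>I::int. 2^n * word_real \<rho> = of_int I + tail \<rho> n"
proof -
  have "word_real \<rho> = (\<Sum>p<n. ab \<rho> p / 2^(p+1)) + tail \<rho> n / 2^n"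
    using tail_split[of \<rho> 0 n] word_real_tail by simp
  then have "2^n * word_real \<rho> = (\<Sum>p<n. 2^n * (ab \<rho> p / 2^(p+1))) + tail \<rho> n"
    by (simp add: algebra_simps sum_distrib_left)
  also have "(\<Sum>p<n. 2^n * (ab \<rho> p / 2^(p+1))) = (\<Sum>p<n. of_int (if \<rho> p then 2^(n - Suc p) else 0))"
  proof (rule sum.cong)
    fix p assume "p \<in> {..<n}"
    then have e: "n - Suc p + (p + 1) = n" by simp
    have "(2::real)^n = 2^(n - Suc p + (p + 1))" unfolding e ..
    then have "(2::real)^n = 2^(n - Suc p) * 2^(p+1)" by (simp only: power_add)
    then show "2^n * (ab \<rho> p / 2^(p+1)) = of_int (if \<rho> p then 2^(n - Suc p) else 0)"
      unfolding ab_def by simp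
  qed simp
  finally show ?thesis by (metis of_int_sum)
qed

lemma dist_int_le: "dist_int x \<le> \<bar>x\<bar>"
proof (cases "0 \<le> x")
  case True
  then have "frac x \<le> x" unfolding frac_def by simp
  then show ?thesis using True unfolding dist_int_def by simp
next
  case False
  then have "floor x \<le> -1" by linarith
  then have "1 - frac x \<le> - x" unfolding frac_def by linarith
  then show ?thesis using False unfolding dist_int_def by simp
qed

lemma dist_int_shift: "dist_int (x + of_int m) = dist_int x"
  unfolding dist_int_def by simp

lemma xs_close:
  assumes "\<forall>p<m. \<rho> (n + p) = \<rho> (n' + p)"
  shows "dist_int (frac (2^n * word_real \<rho>) - frac (2^n' * word_real \<rho>)) \<le> 1 / 2^m"
proof -
  obtain I where I: "2^n * word_real \<rho> = of_int I + tail \<rho> n" using shift_tail by blast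
  obtain I' where I': "2^n' * word_real \<rho> = of_int I' + tail \<rho> n'" using shift_tail by blast
  have eq: "frac (2^n * word_real \<rho>) - frac (2^n' * word_real \<rho>) =
        (tail \<rho> n - tail \<rho> n') + of_int (floor (tail \<rho> n') - floor (tail \<rho> n))"
    unfolding I I' frac_def by simp
  have "dist_int (frac (2^n * word_real \<rho>) - frac (2^n' * word_real \<rho>)) = dist_int (tail \<rho> n - tail \<rho> n')"
    unfolding eq by (rule dist_int_shift)
  also have "\<dots> \<le> \<bar>tail \<rho> n - tail \<rho> n'\<bar>" by (rule dist_int_le)
  also have "\<dots> \<le> 1 / 2^m" using tail_close[OF assms] .
  finally show ?thesis .
qed




lemma word_len_global: "length (necklace_word d \<nu> z) = 2^(2^d) * 2^d"
  unfolding necklace_word_def by (rule concat_len) simp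

definition Ssum :: "nat \<Rightarrow> nat" where "Ssum d = (\<Sum>j<d. 2^(2^j) * 2^j)"

lemma Ssum_le: "Ssum d \<le> 2^(2^d) * 2^d"
proof (induction d)
  case 0 then show ?case by (simp add: Ssum_def)
next
  case (Suc d)
  have "Ssum (Suc d) = Ssum d + 2^(2^d) * 2^d" unfolding Ssum_def by simp
  also have "\<dots> \<le> 2 * (2^(2^d) * 2^d)" using Suc by linarith
  also have "\<dots> = 2^(2^d) * 2^Suc d" by simp
  also have "\<dots> \<le> 2^(2^Suc d) * 2^Suc d" by (intro mult_right_mono) simp_all
  finally show ?case .
qed

lemma Ssum_ge: "1 \<le> d \<Longrightarrow> 2 \<le> Ssum d"
proof (induction d rule: dec_induct)
  case base then show ?case by (simp add: Ssum_def)
next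
  case (step d) then show ?case by (simp add: Ssum_def)
qed

lemma exp_bound: "6 \<le> d \<Longrightarrow> 4 * d + 24 \<le> (2::nat)^d"
proof (induction d rule: dec_induct)
  case base then show ?case by simp
next
  case (step d)
  have "(2::nat)^2 \<le> 2^d" using step(1) by (intro power_increasing) auto
  then have "(4::nat) \<le> 2^d" by simp
  then show ?case using step by simp
qed

lemma divmod_unique:
  fixes e x y t t' :: nat
  assumes "t < e" "t' < e" "x*e + t = y*e + t'"
  shows "x = y \<and> t = t'"
proof -
  have "(x*e + t) div e = x" "(x*e + t) mod e = t" using assms(1) by simp_all
  moreover have "(y*e + t') div e = y" "(y*e + t') mod e = t'" using assms(2) by simp_all
  ultimately show ?thesis using assms(3) by metis
qed




lemma main_bound:
  fixes \<rho> :: "nat \<Rightarrow> bool" and \<rho>s :: "nat \<Rightarrow> bool list" and d :: nat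
  assumes an: "affine_necklace d (\<rho>s d)"
    and pos: "\<And>i. i < length (\<rho>s d) \<Longrightarrow> \<rho> (Ssum d + i) = \<rho>s d ! i"
    and d6: "6 \<le> d"
  shows "3/16 \<le> FN (\<lambda>n. frac (2^n * word_real \<rho>)) (Ssum (Suc d)) (1/16)"
proof -
  obtain \<nu> z where nz: "suitable (2^d) \<nu>" "\<rho>s d = necklace_word d \<nu> z"
    using an unfolding affine_necklace_def by blast
  interpret K: neck d \<nu> z using nz(1) d6 by unfold_locales simp_all
  define e where "e = (2::nat)^d"
  define k where "k = d + 6"
  define S where "S = Ssum d"
  define N where "N = Ssum (Suc d)"
  have NS: "N = S + 2^e * e" unfolding N_def S_def e_def Ssum_def by simp
  have Sle: "S \<le> 2^e * e" unfolding S_def e_def by (rule Ssum_le)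
  have S1: "1 \<le> S" using Ssum_ge[of d] d6 unfolding S_def by simp
  have ek: "4 * k \<le> e" using exp_bound[OF d6] unfolding k_def e_def by simp
  have e0: "0 < e" unfolding e_def by simp
  have k1: "1 \<le> k" unfolding k_def by simp
  have Nle: "N \<le> 2 * (2^e * e)" using NS Sle by linarith
  have N0: "0 < N" using NS e0 by simp
  have len: "length (\<rho>s d) = 2^e * e" unfolding nz(2) e_def by (rule word_len_global)
  have rw: "\<rho> (S + x) = necklace_word d \<nu> z ! x" if "x < 2^e * e" for x
    using pos[of x] that len nz(2) unfolding S_def by simp
  define xs where "xs = (\<lambda>n::nat. frac (2^n * word_real \<rho>))"
  define J where "J i = (SOME j. j < 2^e \<and> even j \<and> K.Bf j = K.T (K.Bf i))" for i
  have Ii: "i < 2^e \<and> even i" if "i \<in> K.Ibig" for i using that unfolding K.Ibig_def e_def by auto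
  have Jp: "J i < 2^e \<and> even (J i) \<and> K.Bf (J i) = K.T (K.Bf i)" if "i \<in> K.Ibig" for i
  proof -
    have "\<exists>j. j < 2^e \<and> even j \<and> K.Bf j = K.T (K.Bf i)" using that unfolding K.Ibig_def e_def by auto
    then show ?thesis unfolding J_def by (rule someI_ex)
  qed
  define D where "D = K.Ibig \<times> {1..e-k}"
  define g where "g = (\<lambda>(i,t). (S + i*e + t, S + J i * e + (t - 1)))"
  define g' where "g' = (\<lambda>(i,t). (S + J i * e + (t - 1), S + i*e + t))"
  define G where "G = {(a, b). a \<in> {1..N} \<and> b \<in> {1..N} \<and> a \<noteq> b \<and> dist_int (xs a - xs b) < (1/16) / real N}"
  have FNeq: "FN xs N (1/16) = real (card G) / real N" unfolding FN_def G_def by simp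
  have scale: "(1::real) / 2^(e+k) < (1/16) / real N"
  proof -
    have p: "(2::nat)^(e+k) = 64 * (2^e * e)" unfolding k_def e_def by (simp add: power_add)
    have pos: "0 < 2^e * e" using e0 by simp
    have "16 * N < 64 * (2^e * e)" using Nle pos by linarith
    then have "16 * N < 2^(e+k)" unfolding p .
    then have "16 * real N < 2^(e+k)" by (metis of_nat_less_iff of_nat_mult of_nat_numeral of_nat_power)
    then show ?thesis using N0 by (simp add: divide_simps)
  qed
  have key: "(S + i*e + t, S + J i * e + (t - 1)) \<in> G \<and> (S + J i * e + (t - 1), S + i*e + t) \<in> G"
    if it: "(i, t) \<in> D" for i t
  proof -
    have iI: "i \<in> K.Ibig" and t: "1 \<le> t" "t \<le> e - k" using it unfolding D_def by auto
    have i: "i < 2^e" "even i" using Ii[OF iI] by auto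
    have j: "J i < 2^e" "even (J i)" "K.Bf (J i) = K.T (K.Bf i)" using Jp[OF iI] by auto
    have si: "Suc i < 2^e" using K.even_succ_lt i unfolding e_def by simp
    have sj: "Suc (J i) < 2^e" using K.even_succ_lt j unfolding e_def by simp
    have tk: "t + k \<le> e" using t ek by simp
    have digits: "\<forall>p<e+k. \<rho> (S + i*e + t + p) = \<rho> (S + J i * e + (t - 1) + p)"
    proof (intro allI impI)
      fix p assume p: "p < e + k"
      have b1: "i*e + t + p < 2^e * e"
      proof -
        have "i*e + t + p < i*e + 2*e" using p tk by simp
        also have "\<dots> = (Suc (Suc i)) * e" by simp
        also have "\<dots> \<le> 2^e * e" using si by (intro mult_right_mono) auto
        finally show ?thesis .
      qed
      have b2: "J i * e + (t - 1) + p < 2^e * e"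
      proof -
        have "J i * e + (t - 1) + p < J i * e + 2*e" using p tk by simp
        also have "\<dots> = (Suc (Suc (J i))) * e" by simp
        also have "\<dots> \<le> 2^e * e" using sj by (intro mult_right_mono) auto
        finally show ?thesis .
      qed
      have w: "necklace_word d \<nu> z ! (i*e + t + p) = necklace_word d \<nu> z ! (J i * e + (t - 1) + p)"
        using K.window[of i "J i" t k p] i j t tk p unfolding e_def by simp
      show "\<rho> (S + i*e + t + p) = \<rho> (S + J i * e + (t - 1) + p)"
        using rw[OF b1] rw[OF b2] w by (simp add: add.assoc)
    qed
    have c1: "dist_int (xs (S + i*e + t) - xs (S + J i * e + (t - 1))) \<le> 1 / 2^(e+k)"
      unfolding xs_def by (rule xs_close) (use digits in simp)
    have c2: "dist_int (xs (S + J i * e + (t - 1)) - xs (S + i*e + t)) \<le> 1 / 2^(e+k)"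
      unfolding xs_def by (rule xs_close) (use digits in simp)
    have r1: "S + i*e + t \<in> {1..N}"
    proof -
      have "i*e + t < Suc i * e" using t ek e0 k1 by simp
      also have "\<dots> \<le> 2^e * e" using si by (intro mult_right_mono) auto
      finally show ?thesis using NS t by simp
    qed
    have r2: "S + J i * e + (t - 1) \<in> {1..N}"
    proof -
      have "J i * e + (t - 1) < Suc (J i) * e" using t ek e0 k1 by simp
      also have "\<dots> \<le> 2^e * e" using sj by (intro mult_right_mono) auto
      finally show ?thesis using NS S1 by simp
    qed
    have ne: "S + i*e + t \<noteq> S + J i * e + (t - 1)"
    proof
      assume "S + i*e + t = S + J i * e + (t - 1)"
      then have eq: "i*e + t = J i * e + (t - 1)" by simp
      have tl: "t < e" "t - 1 < e" using tk k1 by auto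
      have "t = t - 1" using divmod_unique[OF tl(1) tl(2) eq] by simp
      then show False using t by simp
    qed
    show ?thesis unfolding G_def using r1 r2 ne c1 c2 scale by auto
  qed
  have Dfin: "finite D" unfolding D_def K.Ibig_def by simp
  have inj_g: "inj_on g D"
  proof (rule inj_onI)
    fix x y assume x: "x \<in> D" and y: "y \<in> D" and eq: "g x = g y"
    obtain i t where xi: "x = (i, t)" by (cases x)
    obtain i' t' where yi: "y = (i', t')" by (cases y)
    have "t < e" "t' < e" using x y ek k1 unfolding xi yi D_def by auto
    moreover have "i*e + t = i'*e + t'" using eq unfolding xi yi g_def by simp
    ultimately show "x = y" using divmod_unique[of t e t' i i'] unfolding xi yi by simp
  qed
  have inj_g': "inj_on g' D"
  proof -
    have "g' = prod.swap \<circ> g" unfolding g_def g'_def by (auto simp: fun_eq_iff)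
    then show ?thesis using inj_g by (simp add: comp_inj_on)
  qed
  have disj: "g ` D \<inter> g' ` D = {}"
  proof (rule ccontr)
    assume "g ` D \<inter> g' ` D \<noteq> {}"
    then obtain x y where x: "x \<in> D" and y: "y \<in> D" and eq: "g x = g' y" by blast
    obtain i t where xi: "x = (i, t)" by (cases x)
    obtain i' t' where yi: "y = (i', t')" by (cases y)
    have t: "1 \<le> t" "t < e" "1 \<le> t'" "t' < e" using x y ek k1 unfolding xi yi D_def by auto
    have e1: "i*e + t = J i' * e + (t' - 1)" and e2: "J i * e + (t - 1) = i' * e + t'"
      using eq unfolding xi yi g_def g'_def by simp_all
    have "t = t' - 1" using divmod_unique[OF _ _ e1] t by simp
    moreover have "t - 1 = t'" using divmod_unique[OF _ _ e2] t by simp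
    ultimately show False using t by simp
  qed
  have sub: "g ` D \<union> g' ` D \<subseteq> G"
  proof
    fix x assume "x \<in> g ` D \<union> g' ` D"
    then obtain y where y: "y \<in> D" and "x = g y \<or> x = g' y" by blast
    moreover obtain i t where "y = (i, t)" by (cases y)
    ultimately show "x \<in> G" using key[of i t] unfolding g_def g'_def by auto
  qed
  have Gfin: "finite G"
  proof -
    have "G \<subseteq> {1..N} \<times> {1..N}" unfolding G_def by auto
    then show ?thesis by (rule finite_subset) simp
  qed
  have "card (g ` D \<union> g' ` D) = card D + card D"
    using card_Un_disjoint[OF finite_imageI[OF Dfin] finite_imageI[OF Dfin] disj]
      card_image[OF inj_g] card_image[OF inj_g'] by simp
  then have cG: "2 * card D \<le> card G" using card_mono[OF Gfin sub] by simp
  have cD: "card D = card K.Ibig * (e - k)" unfolding D_def by (simp add: card_cartesian_product)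
  have cI: "2^e \<le> 4 * card K.Ibig" using K.Ibig_card unfolding e_def by simp
  have "3 * N \<le> 6 * (2^e * e)" using Nle by linarith
  also have "\<dots> \<le> 8 * (2^e * (e - k))"
  proof -
    have "6 * e \<le> 8 * (e - k)" using ek by simp
    then have "6 * e * 2^e \<le> 8 * (e - k) * 2^e" by (rule mult_right_mono) simp
    then show ?thesis by (simp add: algebra_simps)
  qed
  also have "\<dots> \<le> 8 * (4 * card K.Ibig * (e - k))" using cI by (intro mult_left_mono mult_right_mono) auto
  also have "\<dots> = 16 * (2 * card D)" unfolding cD by simp
  also have "\<dots> \<le> 16 * card G" using cG by simp
  finally have fin: "3 * N \<le> 16 * card G" .
  then have "3 * real N \<le> 16 * real (card G)" by (metis of_nat_le_iff of_nat_mult of_nat_numeral)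
  then have "3/16 \<le> real (card G) / real N" using N0 by (simp add: divide_simps)
  then show ?thesis using FNeq unfolding xs_def N_def by simp
qed

theorem theorem1:
  fixes \<rho> :: "nat \<Rightarrow> bool"
  assumes "in_L \<rho>"
  shows "\<not> poissonian_pc (\<lambda>n. frac (2 ^ n * word_real \<rho>))"
proof
  assume pc: "poissonian_pc (\<lambda>n. frac (2 ^ n * word_real \<rho>))"
  obtain \<rho>s where an: "\<forall>d. affine_necklace d (\<rho>s d)"
    and pos: "\<forall>d i. i < length (\<rho>s d) \<longrightarrow> \<rho> ((\<Sum>j<d. length (\<rho>s j)) + i) = \<rho>s d ! i"
    using assms unfolding in_L_def by blast
  have lens: "length (\<rho>s j) = 2^(2^j) * 2^j" for j
  proof -
    obtain \<nu> z where "\<rho>s j = necklace_word j \<nu> z" using an unfolding affine_necklace_def by blast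
    then show ?thesis by (simp add: word_len_global)
  qed
  have S: "(\<Sum>j<d. length (\<rho>s j)) = Ssum d" for d unfolding Ssum_def lens ..
  have mb: "3/16 \<le> FN (\<lambda>n. frac (2^n * word_real \<rho>)) (Ssum (Suc d)) (1/16)" if "6 \<le> d" for d
    using main_bound[where \<rho>=\<rho> and \<rho>s=\<rho>s and d=d] an pos S that by simp
  have lim: "(\<lambda>N. FN (\<lambda>n. frac (2^n * word_real \<rho>)) N (1/16)) \<longlonglongrightarrow> 2 * (1/16)"
  proof -
    have "(1/16::real) \<ge> 0" by simp
    then show ?thesis using pc unfolding poissonian_pc_def by blast
  qed
  then obtain no where no: "\<forall>n\<ge>no. norm (FN (\<lambda>n. frac (2^n * word_real \<rho>)) n (1/16) - 2 * (1/16)) < 1/16"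
    unfolding LIMSEQ_iff by (metis divide_pos_pos zero_less_numeral zero_less_one)
  define d where "d = max 6 no"
  have "no \<le> d" unfolding d_def by simp
  also have "d < 2^d" by (rule less_exp)
  also have "(2::nat)^d \<le> 2^(2^d) * 2^d" by simp
  also have "\<dots> \<le> Ssum (Suc d)" unfolding Ssum_def by simp
  finally have "no \<le> Ssum (Suc d)" by simp
  then have "norm (FN (\<lambda>n. frac (2^n * word_real \<rho>)) (Ssum (Suc d)) (1/16) - 2 * (1/16)) < 1/16"
    using no by blast
  moreover have "3/16 \<le> FN (\<lambda>n. frac (2^n * word_real \<rho>)) (Ssum (Suc d)) (1/16)"
    using mb[of d] unfolding d_def by simp
  ultimately show False by simp
qed


end
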